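(* Let $G$ be an $X-Y$ normalized graph, let $S \subseteq N(X)$, and assume that no vertex of $S$ is adjacent to a vertex of $Y$. Let $K_1$ be an important $X-Y$ separator of $G$ disjoint with $S$ and let $K(S)$ be the important witness of $S$. Then $K_1 \geq K(S)$.
   Context: $G$ is a finite undirected graph and $X,Y$ are disjoint subsets of $V(G)$; $N(C)=(\bigcup_{v\in C}N(v))\setminus C$. An $X-Y$ separator is a set $K \subseteq V(G) \setminus (X \cup Y)$ such that $G \setminus K$ has no path from $X$ to $Y$; minimal means inclusion-minimal. $G$ is $X-Y$ normalized if $N(X)$ is the only minimum-cardinality $X-Y$ separator. Let $r$ be the minimum size of an $X-Y$ separator; the excess of an $X-Y$ separator $K$ is $|K|-r$. For $S\subseteq N(X)$, the cover excess $CE(S)$ is the excess of a smallest $X-Y$ separator disjoint with $S$. An $X-Y$ separator $K$ with $K\cap S=\emptyset$ and excess $CE(S)$ is a witness of $S$. $NR(G,Y,K)$ is the set of vertices not reachable from $Y$ in $G\setminus K$; $K \geq K'$ means $NR(G,Y,K)\supseteq NR(G,Y,K')$, and $K'<K$ means $K\geq K'$ and $NR(G,Y,K)\ne NR(G,Y,K')$. A minimal $X-Y$ separator $K$ is important if there is no $X-Y$ separator $K'$ with $K<K'$ and $|K|\geq|K'|$. An important witness of $S$ is a witness of $S$ that is an important $X-Y$ separator; under the hypotheses it exists and is unique, denoted $K(S)$. *)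

theory Defs
  imports Main
begin

definition graph :: "'a set \<Rightarrow> ('a \<Rightarrow> 'a \<Rightarrow> bool) \<Rightarrow> bool" where
  "graph V E \<longleftrightarrow> finite V \<and> (\<forall>u v. E u v \<longrightarrow> u \<in> V \<and> v \<in> V)
     \<and> (\<forall>u v. E u v \<longrightarrow> E v u) \<and> (\<forall>v. \<not> E v v)"

definition nbhd :: "('a \<Rightarrow> 'a \<Rightarrow> bool) \<Rightarrow> 'a set \<Rightarrow> 'a set" where
  "nbhd E C = {u. \<exists>v\<in>C. E v u} - C"

definition edges_in :: "('a \<Rightarrow> 'a \<Rightarrow> bool) \<Rightarrow> 'a set \<Rightarrow> ('a \<times> 'a) set" where
  "edges_in E W = {(u, v). u \<in> W \<and> v \<in> W \<and> E u v}"

definition reach :: "'a set \<Rightarrow> ('a \<Rightarrow> 'a \<Rightarrow> bool) \<Rightarrow> 'a set \<Rightarrow> 'a set \<Rightarrow> 'a set" where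
  "reach V E K A = {w. \<exists>a\<in>A \<inter> (V - K). (a, w) \<in> (edges_in E (V - K))\<^sup>*}"

definition is_sep :: "'a set \<Rightarrow> ('a \<Rightarrow> 'a \<Rightarrow> bool) \<Rightarrow> 'a set \<Rightarrow> 'a set \<Rightarrow> 'a set \<Rightarrow> bool" where
  "is_sep V E X Y K \<longleftrightarrow> K \<subseteq> V - (X \<union> Y) \<and> reach V E K X \<inter> Y = {}"

definition min_sep :: "'a set \<Rightarrow> ('a \<Rightarrow> 'a \<Rightarrow> bool) \<Rightarrow> 'a set \<Rightarrow> 'a set \<Rightarrow> 'a set \<Rightarrow> bool" where
  "min_sep V E X Y K \<longleftrightarrow> is_sep V E X Y K \<and> (\<forall>K'. K' \<subset> K \<longrightarrow> \<not> is_sep V E X Y K')"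

definition normalized :: "'a set \<Rightarrow> ('a \<Rightarrow> 'a \<Rightarrow> bool) \<Rightarrow> 'a set \<Rightarrow> 'a set \<Rightarrow> bool" where
  "normalized V E X Y \<longleftrightarrow> is_sep V E X Y (nbhd E X) \<and>
     (\<forall>K. is_sep V E X Y K \<longrightarrow> card (nbhd E X) \<le> card K \<and>
          (card K = card (nbhd E X) \<longrightarrow> K = nbhd E X))"

definition sep_num :: "'a set \<Rightarrow> ('a \<Rightarrow> 'a \<Rightarrow> bool) \<Rightarrow> 'a set \<Rightarrow> 'a set \<Rightarrow> nat" where
  "sep_num V E X Y = Min {card K | K. is_sep V E X Y K}"

definition excess :: "'a set \<Rightarrow> ('a \<Rightarrow> 'a \<Rightarrow> bool) \<Rightarrow> 'a set \<Rightarrow> 'a set \<Rightarrow> 'a set \<Rightarrow> nat" where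
  "excess V E X Y K = card K - sep_num V E X Y"

definition cover_excess :: "'a set \<Rightarrow> ('a \<Rightarrow> 'a \<Rightarrow> bool) \<Rightarrow> 'a set \<Rightarrow> 'a set \<Rightarrow> 'a set \<Rightarrow> nat" where
  "cover_excess V E X Y S =
     Min {card K | K. is_sep V E X Y K \<and> K \<inter> S = {}} - sep_num V E X Y"

definition witness :: "'a set \<Rightarrow> ('a \<Rightarrow> 'a \<Rightarrow> bool) \<Rightarrow> 'a set \<Rightarrow> 'a set \<Rightarrow> 'a set \<Rightarrow> 'a set \<Rightarrow> bool" where
  "witness V E X Y S K \<longleftrightarrow> is_sep V E X Y K \<and> K \<inter> S = {} \<and>
     excess V E X Y K = cover_excess V E X Y S"

definition NR :: "'a set \<Rightarrow> ('a \<Rightarrow> 'a \<Rightarrow> bool) \<Rightarrow> 'a set \<Rightarrow> 'a set \<Rightarrow> 'a set" where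
  "NR V E Y K = (V - K) - reach V E K Y"

definition sep_ge :: "'a set \<Rightarrow> ('a \<Rightarrow> 'a \<Rightarrow> bool) \<Rightarrow> 'a set \<Rightarrow> 'a set \<Rightarrow> 'a set \<Rightarrow> bool" where
  "sep_ge V E Y K K' \<longleftrightarrow> NR V E Y K' \<subseteq> NR V E Y K"

definition sep_less :: "'a set \<Rightarrow> ('a \<Rightarrow> 'a \<Rightarrow> bool) \<Rightarrow> 'a set \<Rightarrow> 'a set \<Rightarrow> 'a set \<Rightarrow> bool" where
  "sep_less V E Y K' K \<longleftrightarrow> sep_ge V E Y K K' \<and> NR V E Y K \<noteq> NR V E Y K'"

definition important :: "'a set \<Rightarrow> ('a \<Rightarrow> 'a \<Rightarrow> bool) \<Rightarrow> 'a set \<Rightarrow> 'a set \<Rightarrow> 'a set \<Rightarrow> bool" where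
  "important V E X Y K \<longleftrightarrow> min_sep V E X Y K \<and>
     \<not> (\<exists>K'. is_sep V E X Y K' \<and> sep_less V E Y K K' \<and> card K \<ge> card K')"

definition important_witness :: "'a set \<Rightarrow> ('a \<Rightarrow> 'a \<Rightarrow> bool) \<Rightarrow> 'a set \<Rightarrow> 'a set \<Rightarrow> 'a set \<Rightarrow> 'a set \<Rightarrow> bool" where
  "important_witness V E X Y S K \<longleftrightarrow> witness V E X Y S K \<and> important V E X Y K"

end

theory Submission
  imports Defs
begin

lemma rt_in: "(a,w) \<in> (edges_in E W)\<^sup>* \<Longrightarrow> a \<in> W \<Longrightarrow> w \<in> W"
  by (induction rule: rtrancl_induct) (auto simp: edges_in_def)

lemma rt_sym: assumes "\<forall>u v. E u v \<longrightarrow> E v u" and "(a,w) \<in> (edges_in E W)\<^sup>*"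
  shows "(w,a) \<in> (edges_in E W)\<^sup>*"
  using assms(2)
proof (induction rule: rtrancl_induct)
  case base then show ?case by simp
next
  case (step y z)
  then have "(z,y) \<in> edges_in E W" using assms(1) by (auto simp: edges_in_def)
  then show ?case using step by (meson converse_rtrancl_into_rtrancl)
qed

lemma reach_in:
  assumes "X \<subseteq> C" shows "reach V E (nbhd E C) X \<subseteq> C"
proof
  fix w assume "w \<in> reach V E (nbhd E C) X"
  then obtain a where a: "a \<in> X" "(a,w) \<in> (edges_in E (V - nbhd E C))\<^sup>*"
    by (auto simp: reach_def)
  from a(2) show "w \<in> C"
  proof (induction rule: rtrancl_induct)
    case base then show ?case using a assms by auto
  next
    case (step y z) then show ?case by (auto simp: edges_in_def nbhd_def)
  qed
qed

lemma reach_out: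
  assumes "\<forall>u v. E u v \<longrightarrow> E v u" "Y \<inter> C = {}"
  shows "reach V E (nbhd E C) Y \<inter> C = {}"
proof -
  { fix w assume "w \<in> reach V E (nbhd E C) Y"
    then obtain a where a: "a \<in> Y" "(a,w) \<in> (edges_in E (V - nbhd E C))\<^sup>*"
      by (auto simp: reach_def)
    from a(2) have "w \<notin> C"
    proof (induction rule: rtrancl_induct)
      case base then show ?case using a assms by auto
    next
      case (step y z) then show ?case using assms(1) by (auto simp: edges_in_def nbhd_def)
    qed }
  then show ?thesis by auto
qed

lemma reachX_NR:
  assumes "\<forall>u v. E u v \<longrightarrow> E v u" "is_sep V E X Y K"
  shows "reach V E K X \<subseteq> NR V E Y K"
proof
  fix w assume w: "w \<in> reach V E K X"
  then obtain a where a: "a \<in> X \<inter> (V - K)" "(a,w) \<in> (edges_in E (V - K))\<^sup>*"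
    by (auto simp: reach_def)
  have "w \<in> V - K" using rt_in[OF a(2)] a(1) by auto
  moreover have "w \<notin> reach V E K Y"
  proof
    assume "w \<in> reach V E K Y"
    then obtain b where b: "b \<in> Y \<inter> (V - K)" "(b,w) \<in> (edges_in E (V - K))\<^sup>*"
      by (auto simp: reach_def)
    have "(a,b) \<in> (edges_in E (V - K))\<^sup>*"
      using a(2) rt_sym[OF assms(1) b(2)] by simp
    then have "b \<in> reach V E K X" using a(1) by (auto simp: reach_def)
    then show False using assms(2) b(1) by (auto simp: is_sep_def)
  qed
  ultimately show "w \<in> NR V E Y K" by (simp add: NR_def)
qed

lemma nbhd_NR:
  assumes "graph V E"
  shows "nbhd E (NR V E Y K) \<subseteq> K"
proof
  fix v assume v: "v \<in> nbhd E (NR V E Y K)"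
  then obtain u where u: "u \<in> NR V E Y K" "E u v" "v \<notin> NR V E Y K"
    by (auto simp: nbhd_def)
  show "v \<in> K"
  proof (rule ccontr)
    assume "v \<notin> K"
    moreover have "v \<in> V" using u(2) assms by (auto simp: graph_def)
    ultimately have "v \<in> reach V E K Y" using u(3) by (auto simp: NR_def)
    then obtain b where b: "b \<in> Y \<inter> (V - K)" "(b,v) \<in> (edges_in E (V - K))\<^sup>*"
      by (auto simp: reach_def)
    have "(v,u) \<in> edges_in E (V - K)" using u assms \<open>v \<notin> K\<close> \<open>v \<in> V\<close>
      by (auto simp: edges_in_def NR_def graph_def)
    then have "(b,u) \<in> (edges_in E (V - K))\<^sup>*" using b(2) by simp
    then have "u \<in> reach V E K Y" using b(1) by (auto simp: reach_def)
    then show False using u(1) by (auto simp: NR_def)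
  qed
qed

lemma X_NR:
  assumes "\<forall>u v. E u v \<longrightarrow> E v u" "is_sep V E X Y K" "X \<subseteq> V"
  shows "X \<subseteq> NR V E Y K"
proof -
  have "X \<subseteq> reach V E K X" using assms(2,3) by (auto simp: reach_def is_sep_def)
  then show ?thesis using reachX_NR[OF assms(1,2)] by auto
qed

lemma Y_NR:
  assumes "is_sep V E X Y K" "Y \<subseteq> V"
  shows "Y \<inter> NR V E Y K = {}"
proof -
  have "Y \<subseteq> reach V E K Y" using assms by (auto simp: reach_def is_sep_def)
  then show ?thesis by (auto simp: NR_def)
qed

theorem lemma3:
  fixes V :: "'a set" and E :: "'a \<Rightarrow> 'a \<Rightarrow> bool" and X Y S K1 KS :: "'a set"
  assumes "graph V E"
    and "X \<subseteq> V" and "Y \<subseteq> V" and "X \<inter> Y = {}"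
    and "normalized V E X Y"
    and "S \<subseteq> nbhd E X"
    and "\<forall>s\<in>S. \<forall>y\<in>Y. \<not> E s y"
    and "important V E X Y K1" and "K1 \<inter> S = {}"
    and "important_witness V E X Y S KS"
  shows "sep_ge V E Y K1 KS"
proof -
  have G: "graph V E" by fact
  have sym: "\<forall>u v. E u v \<longrightarrow> E v u" using G by (simp add: graph_def)
  have finV: "finite V" using G by (simp add: graph_def)
  have s1: "is_sep V E X Y K1" using assms(8) by (simp add: important_def min_sep_def)
  have wS: "witness V E X Y S KS" using assms(10) by (simp add: important_witness_def)
  have s2: "is_sep V E X Y KS" "KS \<inter> S = {}" using wS by (auto simp: witness_def)
  define A where "A = NR V E Y K1"
  define B where "B = NR V E Y KS"
  define P where "P = nbhd E (A \<union> B)"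
  define Q where "Q = nbhd E (A \<inter> B)"
  have NA: "nbhd E A \<subseteq> K1" unfolding A_def by (rule nbhd_NR[OF G])
  have NB: "nbhd E B \<subseteq> KS" unfolding B_def by (rule nbhd_NR[OF G])
  have PK: "P \<subseteq> K1 \<union> KS" "Q \<subseteq> K1 \<union> KS" "P \<inter> Q \<subseteq> K1 \<inter> KS"
    using NA NB unfolding P_def Q_def nbhd_def by blast+
  have XA: "X \<subseteq> A \<inter> B" using X_NR[OF sym s1 assms(2)] X_NR[OF sym s2(1) assms(2)]
    by (auto simp: A_def B_def)
  have YA: "Y \<inter> (A \<union> B) = {}" using Y_NR[OF s1 assms(3)] Y_NR[OF s2(1) assms(3)]
    by (auto simp: A_def B_def)
  have Ksub: "K1 \<subseteq> V - (X \<union> Y)" "KS \<subseteq> V - (X \<union> Y)" using s1 s2 by (auto simp: is_sep_def)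
  have rP: "reach V E P X \<subseteq> A \<union> B" unfolding P_def by (rule reach_in) (use XA in auto)
  have rQ: "reach V E Q X \<subseteq> A \<inter> B" unfolding Q_def by (rule reach_in) (use XA in auto)
  have sP: "is_sep V E X Y P"
    unfolding is_sep_def using PK Ksub rP YA by blast
  have sQ: "is_sep V E X Y Q"
    unfolding is_sep_def using PK Ksub rQ YA by blast
  have SAB: "S \<subseteq> A \<inter> B"
  proof
    fix s assume s: "s \<in> S"
    then obtain x where x: "x \<in> X" "E x s" "s \<notin> X" using assms(6) by (auto simp: nbhd_def)
    have sV: "s \<in> V" using x(2) G by (auto simp: graph_def)
    have "s \<in> reach V E K1 X"
      unfolding reach_def using x sV s assms(9) Ksub(1) assms(2)
      by (auto simp: edges_in_def intro!: bexI[of _ x] r_into_rtrancl)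
    moreover have "s \<in> reach V E KS X"
      unfolding reach_def using x sV s s2(2) Ksub(2) assms(2)
      by (auto simp: edges_in_def intro!: bexI[of _ x] r_into_rtrancl)
    ultimately show "s \<in> A \<inter> B" using reachX_NR[OF sym s1] reachX_NR[OF sym s2(1)]
      by (auto simp: A_def B_def)
  qed
  have QS: "Q \<inter> S = {}" using SAB by (auto simp: Q_def nbhd_def)
  have finK: "finite K1" "finite KS" using Ksub finV by (auto intro: finite_subset)
  have finPQ: "finite P" "finite Q" using PK finK by (auto intro: finite_subset)
  have bnd: "\<And>K. is_sep V E X Y K \<Longrightarrow> card K \<le> card V"
    using finV by (auto simp: is_sep_def intro!: card_mono)
  define M where "M = {card K | K. is_sep V E X Y K \<and> K \<inter> S = {}}"
  define N where "N = {card K | K. is_sep V E X Y K}"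
  have finM: "finite M" using bnd by (auto simp: M_def intro: finite_subset[of _ "{..card V}"])
  have finN: "finite N" using bnd by (auto simp: N_def intro: finite_subset[of _ "{..card V}"])
  have "card KS \<in> M" using s2 by (auto simp: M_def)
  then have Mne: "M \<noteq> {}" by auto
  have "Min M \<in> M" using finM Mne by simp
  then obtain K0 where K0: "is_sep V E X Y K0" "card K0 = Min M" by (auto simp: M_def)
  have sn: "sep_num V E X Y = Min N" by (simp add: sep_num_def N_def)
  have "card K0 \<in> N" using K0 unfolding N_def by blast
  then have "sep_num V E X Y \<le> Min M" unfolding sn K0(2)[symmetric] by (rule Min_le[OF finN])
  moreover have "card KS \<in> N" using s2 unfolding N_def by blast
  then have "sep_num V E X Y \<le> card KS" unfolding sn by (rule Min_le[OF finN])
  moreover have "card KS - sep_num V E X Y = Min M - sep_num V E X Y"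
    using wS by (simp add: witness_def excess_def cover_excess_def M_def)
  ultimately have "card KS = Min M" by linarith
  moreover have "card Q \<in> M" using sQ QS by (auto simp: M_def)
  ultimately have KSQ: "card KS \<le> card Q" using Min_le[OF finM] by simp
  \<comment> \<open>submodularity\<close>
  have e1: "card P + card Q = card (P \<union> Q) + card (P \<inter> Q)"
    by (rule card_Un_Int[OF finPQ])
  have e2: "card K1 + card KS = card (K1 \<union> KS) + card (K1 \<inter> KS)"
    by (rule card_Un_Int[OF finK])
  have l1: "card (P \<union> Q) \<le> card (K1 \<union> KS)"
    by (rule card_mono) (use PK finK in auto)
  have l2: "card (P \<inter> Q) \<le> card (K1 \<inter> KS)"
    by (rule card_mono) (use PK finK in auto)
  have "card P + card Q \<le> card K1 + card KS" using e1 e2 l1 l2 by linarith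
  then have "card P \<le> card K1" using KSQ by linarith
  moreover have "A \<union> B \<subseteq> NR V E Y P"
  proof -
    have "A \<union> B \<subseteq> V" by (auto simp: A_def B_def NR_def)
    moreover have "(A \<union> B) \<inter> P = {}" by (auto simp: P_def nbhd_def)
    moreover have "reach V E P Y \<inter> (A \<union> B) = {}"
      unfolding P_def by (rule reach_out[OF sym]) (use YA in auto)
    ultimately show ?thesis by (auto simp: NR_def)
  qed
  ultimately have "NR V E Y P = A"
    using assms(8) sP unfolding important_def sep_less_def sep_ge_def A_def by blast
  then show ?thesis using \<open>A \<union> B \<subseteq> NR V E Y P\<close>
    by (auto simp: sep_ge_def A_def B_def)
qed

end
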